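(* Let $N$ be an $n$-dimensional hypersurface isometrically immersed in Euclidean space $\mathbb R^{n+1}$. Then $N$ is $\Phi$-SSU with respect to this immersion if and only if at every point, for a suitable choice of unit normal, its principal curvatures satisfy $0<\lambda_1\le\lambda_2\le\cdots\le\lambda_n<\frac13(\lambda_1+\cdots+\lambda_{n-1})$.
   Context: For an isometric immersion of a Riemannian $n$-manifold $N$ into $\mathbb R^q$ with second fundamental form $\mathsf B$, $N$ is $\Phi$-SSU with respect to this immersion if for every $y\in N$ and every unit tangent vector $\mathsf x\in T_yN$, $\sum_{\beta=1}^n\big(4|\mathsf B(\mathsf x,\mathsf e_\beta)|^2-\langle \mathsf B(\mathsf x,\mathsf x),\mathsf B(\mathsf e_\beta,\mathsf e_\beta)\rangle\big)<0$, where $\{\mathsf e_\beta\}$ is an orthonormal basis of $T_yN$. *)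

theory Defs
  imports "HOL-Analysis.Analysis"
begin

text \<open>Pointwise model of an isometric immersion: N is a set of points; at each point y
the tangent space T_yN is identified isometrically with real^'n (so the standard basis
axis b 1 is an orthonormal basis of T_yN), and B y is the second fundamental form at y,
with values in the ambient Euclidean space.\<close>

definition phi_SSU :: "'y set \<Rightarrow> ('y \<Rightarrow> real^'n \<Rightarrow> real^'n \<Rightarrow> 'v::real_inner) \<Rightarrow> bool" where
  "phi_SSU N B \<longleftrightarrow>
     (\<forall>y\<in>N. \<forall>x::real^'n. norm x = 1 \<longrightarrow>
        (\<Sum>b\<in>(UNIV::'n set). 4 * (norm (B y x (axis b 1)))^2
             - inner (B y x x) (B y (axis b 1) (axis b 1))) < 0)"

text \<open>lam 0 \<le> ... \<le> lam (n-1) (n = CARD('n)) are the principal curvatures of the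
self-adjoint shape operator S, i.e. its eigenvalues counted with multiplicity, realised
by an orthonormal frame of principal directions u 0, ..., u (n-1).\<close>

definition principal_curvatures :: "real^'n^'n \<Rightarrow> (nat \<Rightarrow> real) \<Rightarrow> bool" where
  "principal_curvatures S lam \<longleftrightarrow>
     (\<forall>i j. i \<le> j \<and> j < CARD('n) \<longrightarrow> lam i \<le> lam j) \<and>
     (\<exists>u :: nat \<Rightarrow> real^'n.
        (\<forall>i<CARD('n). S *v u i = lam i *\<^sub>R u i) \<and>
        (\<forall>i<CARD('n). \<forall>j<CARD('n). inner (u i) (u j) = (if i = j then 1 else 0)))"

end

theory Submission
  imports Defs
begin

lemma sym_inner:
  fixes A :: "real^'n^'n"
  assumes "transpose A = A"
  shows "x \<bullet> (A *v y) = (A *v x) \<bullet> y"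
  by (metis assms dot_lmul_matrix vector_transpose_matrix)

lemma quad_nonneg_imp:
  fixes a c :: real
  assumes "a \<ge> 0" "\<forall>t. 0 \<le> 2*t*a + t^2*c"
  shows "a = 0"
proof (rule ccontr)
  assume "a \<noteq> 0" then have a: "a > 0" using assms by auto
  show False
  proof (cases "c \<le> 0")
    case True
    with assms(2)[rule_format, of "-1"] a show False by (simp add: power2_eq_square)
  next
    case False
    then have c: "c > 0" by simp
    from assms(2)[rule_format, of "-a/c"] have "0 \<le> 2*(-a/c)*a + (a/c)^2*c" by (simp add: power2_eq_square)
    also have "\<dots> = - (a*a/c)" using c by (simp add: field_simps power2_eq_square)
    finally show False using a c by (smt (verit) divide_pos_pos mult_pos_pos)
  qed
qed

lemma exists_orth:
  fixes u :: "nat \<Rightarrow> real^'n"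
  assumes "k < CARD('n)"
  shows "\<exists>x. norm x = 1 \<and> (\<forall>j<k. x \<bullet> u j = 0)"
proof -
  have "dim (u ` {..<k}) \<le> card (u ` {..<k})"
    by (rule dim_le_card) (auto intro: span_base)
  also have "\<dots> \<le> k" using card_image_le[of "{..<k}" u] by simp
  finally have "dim (u ` {..<k}) < DIM(real^'n)" using assms by simp
  then obtain x where x: "x \<noteq> 0" "\<And>y. y \<in> span (u ` {..<k}) \<Longrightarrow> orthogonal x y"
    using orthogonal_to_subspace_exists by metis
  have "norm (x /\<^sub>R norm x) = 1" using x by simp
  moreover have "\<forall>j<k. (x /\<^sub>R norm x) \<bullet> u j = 0"
    using x(2) by (auto simp: orthogonal_def span_base)
  ultimately show ?thesis by blast
qed

lemma min_eigen:
  fixes A :: "real^'n^'n" and u :: "nat \<Rightarrow> real^'n" and lam :: "nat \<Rightarrow> real"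
  assumes sym: "transpose A = A" and k: "k < CARD('n)"
    and eig: "\<forall>i<k. A *v u i = lam i *\<^sub>R u i"
  shows "\<exists>v. norm v = 1 \<and> (\<forall>j<k. v \<bullet> u j = 0) \<and> A *v v = (v \<bullet> (A *v v)) *\<^sub>R v \<and>
     (\<forall>x. norm x = 1 \<and> (\<forall>j<k. x \<bullet> u j = 0) \<longrightarrow> v \<bullet> (A *v v) \<le> x \<bullet> (A *v x))"
proof -
  define S where "S = {x::real^'n. norm x = 1 \<and> (\<forall>j<k. x \<bullet> u j = 0)}"
  have S_eq: "S = sphere 0 1 \<inter> (\<Inter>j\<in>{..<k}. {x. x \<bullet> u j = 0})"
    unfolding S_def by auto
  have "closed S" unfolding S_eq
    by (intro closed_Int closed_INT closed_sphere) (auto intro: closed_hyperplane[of "u _" 0, simplified inner_commute])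
  moreover have "bounded S" unfolding S_eq by (meson bounded_Int bounded_sphere)
  ultimately have "compact S" by (simp add: compact_eq_bounded_closed)
  moreover have "S \<noteq> {}" using exists_orth[OF k, of u] unfolding S_def by auto
  moreover have "continuous_on S (\<lambda>x. x \<bullet> (A *v x))"
    by (intro continuous_intros linear_continuous_on linear_conv_bounded_linear[THEN iffD1] matrix_vector_mul_linear)
  ultimately obtain v where v: "v \<in> S" and vmin: "\<forall>y\<in>S. v \<bullet> (A *v v) \<le> y \<bullet> (A *v y)"
    using continuous_attains_inf by blast
  define \<mu> where "\<mu> = v \<bullet> (A *v v)"
  have v1: "norm v = 1" and vu: "\<forall>j<k. v \<bullet> u j = 0" using v unfolding S_def by auto
  have vv: "v \<bullet> v = 1" using v1 by (simp add: dot_square_norm)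
  have ge: "\<mu> * (norm x)^2 \<le> x \<bullet> (A *v x)" if x: "\<forall>j<k. x \<bullet> u j = 0" for x
  proof (cases "x = 0")
    case True then show ?thesis by simp
  next
    case False
    have "x /\<^sub>R norm x \<in> S" using x False unfolding S_def by auto
    then have "\<mu> \<le> (x /\<^sub>R norm x) \<bullet> (A *v (x /\<^sub>R norm x))" using vmin \<mu>_def by blast
    also have "\<dots> = (x \<bullet> (A *v x)) / (norm x)^2"
      by (simp add: matrix_vector_mult_scaleR power2_eq_square field_simps)
    finally show ?thesis using False by (simp add: field_simps)
  qed
  define w where "w = A *v v - \<mu> *\<^sub>R v"
  have wu: "w \<bullet> u j = 0" if "j < k" for j
  proof -
    have "(A *v v) \<bullet> u j = v \<bullet> (A *v u j)" using sym_inner[OF sym] by simp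
    also have "\<dots> = 0" using eig vu that by simp
    finally show ?thesis using vu that unfolding w_def by (simp add: inner_diff_left)
  qed
  have wv: "w \<bullet> v = 0" unfolding w_def \<mu>_def using vv
    by (simp add: inner_diff_left inner_diff_right inner_commute)
  have wAv: "w \<bullet> (A *v v) = w \<bullet> w"
    unfolding w_def \<mu>_def using wv[unfolded w_def \<mu>_def]
    by (simp add: inner_diff_left inner_diff_right inner_commute)
  have vAw: "v \<bullet> (A *v w) = w \<bullet> w"
    using wAv sym_inner[OF sym, of v w] by (simp add: inner_commute)
  have quad: "0 \<le> 2*t*(w \<bullet> w) + t^2*(w \<bullet> (A *v w) - \<mu> * (w \<bullet> w))" for t
  proof -
    let ?x = "v + t *\<^sub>R w"
    have "\<forall>j<k. ?x \<bullet> u j = 0" using vu wu by (simp add: inner_add_left)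
    from ge[OF this] have "\<mu> * (?x \<bullet> ?x) \<le> ?x \<bullet> (A *v ?x)" by (simp add: dot_square_norm)
    moreover have "?x \<bullet> ?x = 1 + t^2 * (w \<bullet> w)"
      using vv wv by (simp add: inner_add_left inner_add_right inner_commute power2_eq_square)
    moreover have "?x \<bullet> (A *v ?x) = \<mu> + 2*t*(w \<bullet> w) + t^2 * (w \<bullet> (A *v w))"
      using wAv vAw \<mu>_def
      by (simp add: matrix_vector_right_distrib matrix_vector_mult_scaleR inner_add_left inner_add_right power2_eq_square algebra_simps)
    ultimately have "\<mu> * (1 + t^2*(w \<bullet> w)) \<le> \<mu> + 2*t*(w \<bullet> w) + t^2*(w \<bullet> (A *v w))"
      by metis
    then show ?thesis by (simp add: algebra_simps)
  qed
  have "w \<bullet> w = 0" by (rule quad_nonneg_imp[OF inner_ge_zero]) (use quad in blast)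
  then have "w = 0" by simp
  then have "A *v v = \<mu> *\<^sub>R v" unfolding w_def by simp
  then show ?thesis using v1 vu vmin \<mu>_def unfolding S_def by blast
qed

definition spinv :: "real^'n^'n \<Rightarrow> nat \<Rightarrow> (nat \<Rightarrow> real) \<Rightarrow> (nat \<Rightarrow> real^'n) \<Rightarrow> bool" where
  "spinv A k lam u \<longleftrightarrow> (\<forall>i<k. A *v u i = lam i *\<^sub>R u i) \<and>
     (\<forall>i<k. \<forall>j<k. u i \<bullet> u j = (if i = j then 1 else 0)) \<and>
     (\<forall>i<k. \<forall>x. norm x = 1 \<and> (\<forall>j<i. x \<bullet> u j = 0) \<longrightarrow> lam i \<le> x \<bullet> (A *v x)) \<and>
     (\<forall>i<k. lam i = u i \<bullet> (A *v u i))"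

lemma spinv_exists:
  fixes A :: "real^'n^'n"
  assumes sym: "transpose A = A"
  shows "k \<le> CARD('n) \<Longrightarrow> \<exists>lam u. spinv A k lam u"
proof (induction k)
  case 0
  then show ?case by (simp add: spinv_def)
next
  case (Suc k)
  then obtain lam u where I: "spinv A k lam u" by auto
  have k: "k < CARD('n)" using Suc by simp
  have eig: "\<forall>i<k. A *v u i = lam i *\<^sub>R u i" using I unfolding spinv_def by blast
  obtain v where
    v: "norm v = 1" "\<forall>j<k. v \<bullet> u j = 0" "A *v v = (v \<bullet> (A *v v)) *\<^sub>R v"
       "\<forall>x. norm x = 1 \<and> (\<forall>j<k. x \<bullet> u j = 0) \<longrightarrow> v \<bullet> (A *v v) \<le> x \<bullet> (A *v x)"
    using min_eigen[OF sym k eig] by blast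
  have vv: "v \<bullet> v = 1" using v(1) by (simp add: dot_square_norm)
  have I2: "\<forall>i<k. \<forall>j<k. u i \<bullet> u j = (if i = j then 1 else 0)"
    and I3: "\<forall>i<k. \<forall>x. norm x = 1 \<and> (\<forall>j<i. x \<bullet> u j = 0) \<longrightarrow> lam i \<le> x \<bullet> (A *v x)"
    and I4: "\<forall>i<k. lam i = u i \<bullet> (A *v u i)"
    using I unfolding spinv_def by blast+
  let ?u = "u(k := v)" and ?lam = "lam(k := v \<bullet> (A *v v))"
  have "spinv A (Suc k) ?lam ?u"
    unfolding spinv_def
  proof (intro conjI allI impI)
    fix i assume i: "i < Suc k"
    show "A *v ?u i = ?lam i *\<^sub>R ?u i"
    proof (cases "i = k")
      case True then show ?thesis using v(3) by (metis fun_upd_same)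
    next
      case False then have "i < k" using i by simp
      then show ?thesis using eig False by simp
    qed
  next
    fix i j assume i: "i < Suc k" and j: "j < Suc k"
    show "?u i \<bullet> ?u j = (if i = j then 1 else 0)"
    proof (cases "i = k")
      case True
      show ?thesis
      proof (cases "j = k")
        case True then show ?thesis using \<open>i = k\<close> vv by simp
      next
        case False then have "j < k" using j by simp
        then show ?thesis using v(2) True False by simp
      qed
    next
      case False then have ik: "i < k" using i by simp
      show ?thesis
      proof (cases "j = k")
        case True then show ?thesis using v(2) ik False by (simp add: inner_commute)
      next
        case False then have "j < k" using j by simp
        then show ?thesis using I2 ik False \<open>i \<noteq> k\<close> by simp
      qed
    qed
  next
    fix i x assume i: "i < Suc k" and x: "norm x = 1 \<and> (\<forall>j<i. x \<bullet> ?u j = 0)"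
    show "?lam i \<le> x \<bullet> (A *v x)"
    proof (cases "i = k")
      case True
      then have "\<forall>j<k. x \<bullet> u j = 0" using x by simp
      then show ?thesis using v(4) x True by simp
    next
      case False then have ik: "i < k" using i by simp
      then have "\<forall>j<i. x \<bullet> u j = 0" using x by simp
      then have "lam i \<le> x \<bullet> (A *v x)" using I3 ik x by blast
      then show ?thesis using False by simp
    qed
  next
    fix i assume i: "i < Suc k"
    show "?lam i = ?u i \<bullet> (A *v ?u i)"
    proof (cases "i = k")
      case True then show ?thesis by simp
    next
      case False then have "i < k" using i by simp
      then show ?thesis using I4 False by simp
    qed
  qed
  then show ?case by blast
qed

lemma spectral:
  fixes A :: "real^'n^'n"
  assumes sym: "transpose A = A"
  shows "\<exists>lam. principal_curvatures A lam"
proof -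
  obtain lam u where I: "spinv A CARD('n) lam u" using spinv_exists[OF sym] by blast
  have I1: "\<forall>i<CARD('n). A *v u i = lam i *\<^sub>R u i"
    and I2: "\<forall>i<CARD('n). \<forall>j<CARD('n). u i \<bullet> u j = (if i = j then 1 else 0)"
    and I3: "\<forall>i<CARD('n). \<forall>x. norm x = 1 \<and> (\<forall>j<i. x \<bullet> u j = 0) \<longrightarrow> lam i \<le> x \<bullet> (A *v x)"
    and I4: "\<forall>i<CARD('n). lam i = u i \<bullet> (A *v u i)"
    using I unfolding spinv_def by blast+
  have "lam i \<le> lam j" if "i \<le> j" "j < CARD('n)" for i j
  proof -
    have "u j \<bullet> u j = 1" using I2 that by simp
    then have "norm (u j) = 1" by (metis norm_eq_sqrt_inner real_sqrt_one)
    moreover have "\<forall>l<i. u j \<bullet> u l = 0" using I2 that by auto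
    ultimately have "lam i \<le> u j \<bullet> (A *v u j)" using I3 that by auto
    then show ?thesis using I4 that by auto
  qed
  then show ?thesis unfolding principal_curvatures_def using I1 I2 by blast
qed


lemma orth_coef:
  fixes u :: "nat \<Rightarrow> real^'n"
  assumes on: "\<forall>i<CARD('n). \<forall>j<CARD('n). u i \<bullet> u j = (if i = j then 1 else 0)"
    and i: "i < CARD('n)"
  shows "(\<Sum>j<CARD('n). a j *\<^sub>R u j) \<bullet> u i = a i"
proof -
  have "(\<Sum>j<CARD('n). a j *\<^sub>R u j) \<bullet> u i = (\<Sum>j<CARD('n). a j * (if j = i then 1 else 0))"
    by (simp add: inner_sum_left on i)
  also have "\<dots> = a i" using i by (simp add: if_distrib cong: if_cong)
  finally show ?thesis .
qed

lemma expand: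
  fixes u :: "nat \<Rightarrow> real^'n"
  assumes on: "\<forall>i<CARD('n). \<forall>j<CARD('n). u i \<bullet> u j = (if i = j then 1 else 0)"
  shows "x = (\<Sum>i<CARD('n). (x \<bullet> u i) *\<^sub>R u i)"
proof -
  define U where "U = u ` {..<CARD('n)}"
  have inj: "inj_on u {..<CARD('n)}"
  proof (rule inj_onI)
    fix i j assume ij: "i \<in> {..<CARD('n)}" "j \<in> {..<CARD('n)}" "u i = u j"
    then have "u i \<bullet> u j = 1" using on by simp
    then show "i = j" using on ij by (metis lessThan_iff zero_neq_one)
  qed
  have cardU: "card U = CARD('n)" unfolding U_def using card_image[OF inj] by simp
  have "0 \<notin> U" unfolding U_def using on by force
  moreover have "pairwise orthogonal U" unfolding U_def pairwise_def orthogonal_def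
    using on by fastforce
  ultimately have ind: "independent U" by (simp add: pairwise_orthogonal_independent)
  have "UNIV \<subseteq> span U"
    by (rule card_ge_dim_independent[OF _ ind]) (simp_all add: cardU)
  define r where "r = x - (\<Sum>i<CARD('n). (x \<bullet> u i) *\<^sub>R u i)"
  have "r \<bullet> u j = 0" if "j < CARD('n)" for j
    unfolding r_def using orth_coef[OF on that] by (simp add: inner_diff_left)
  then have "\<And>y. y \<in> U \<Longrightarrow> orthogonal r y" unfolding U_def orthogonal_def by auto
  then have "orthogonal r r" using \<open>UNIV \<subseteq> span U\<close> by (meson orthogonal_to_span subsetD UNIV_I)
  then have "r = 0" by (simp add: orthogonal_def)
  then show ?thesis unfolding r_def by simp
qed

lemma eig_facts:
  fixes S :: "real^'n^'n" and u :: "nat \<Rightarrow> real^'n"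
  assumes on: "\<forall>i<CARD('n). \<forall>j<CARD('n). u i \<bullet> u j = (if i = j then 1 else 0)"
    and eig: "\<forall>i<CARD('n). S *v u i = lam i *\<^sub>R u i"
  shows "x \<bullet> x = (\<Sum>i<CARD('n). (x \<bullet> u i)^2)"
    and "x \<bullet> (S *v x) = (\<Sum>i<CARD('n). (x \<bullet> u i)^2 * lam i)"
    and "(S *v x) \<bullet> (S *v x) = (\<Sum>i<CARD('n). (x \<bullet> u i)^2 * (lam i)^2)"
proof -
  have ex: "x = (\<Sum>i<CARD('n). (x \<bullet> u i) *\<^sub>R u i)" by (rule expand[OF on])
  have Sx: "S *v x = (\<Sum>i<CARD('n). ((x \<bullet> u i) * lam i) *\<^sub>R u i)"
  proof -
    have "S *v x = S *v (\<Sum>i<CARD('n). (x \<bullet> u i) *\<^sub>R u i)" using ex by simp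
    also have "\<dots> = (\<Sum>i<CARD('n). (x \<bullet> u i) *\<^sub>R (S *v u i))"
      by (simp add: linear_sum[OF matrix_vector_mul_linear] matrix_vector_mult_scaleR)
    also have "\<dots> = (\<Sum>i<CARD('n). ((x \<bullet> u i) * lam i) *\<^sub>R u i)"
      using eig by (intro sum.cong) auto
    finally show ?thesis .
  qed
  have "x \<bullet> x = x \<bullet> (\<Sum>i<CARD('n). (x \<bullet> u i) *\<^sub>R u i)" using ex by simp
  also have "\<dots> = (\<Sum>i<CARD('n). (x \<bullet> u i)^2)"
    by (simp add: inner_sum_right power2_eq_square)
  finally show "x \<bullet> x = (\<Sum>i<CARD('n). (x \<bullet> u i)^2)" .
  have "x \<bullet> (S *v x) = (\<Sum>i<CARD('n). ((x \<bullet> u i) * lam i) * (x \<bullet> u i))"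
    unfolding Sx by (simp add: inner_sum_right)
  also have "\<dots> = (\<Sum>i<CARD('n). (x \<bullet> u i)^2 * lam i)"
    by (simp add: power2_eq_square algebra_simps)
  finally show "x \<bullet> (S *v x) = (\<Sum>i<CARD('n). (x \<bullet> u i)^2 * lam i)" .
  have "(S *v x) \<bullet> (S *v x) = (\<Sum>i<CARD('n). ((x \<bullet> u i) * lam i) * ((S *v x) \<bullet> u i))"
    by (subst (2) Sx) (simp add: inner_sum_right)
  also have "\<dots> = (\<Sum>i<CARD('n). ((x \<bullet> u i) * lam i) * ((x \<bullet> u i) * lam i))"
    by (intro sum.cong refl) (simp add: Sx orth_coef[OF on])
  also have "\<dots> = (\<Sum>i<CARD('n). (x \<bullet> u i)^2 * (lam i)^2)"
    by (simp add: power2_eq_square algebra_simps)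
  finally show "(S *v x) \<bullet> (S *v x) = (\<Sum>i<CARD('n). (x \<bullet> u i)^2 * (lam i)^2)" .
qed

lemma trace_eig:
  fixes S :: "real^'n^'n" and u :: "nat \<Rightarrow> real^'n"
  assumes on: "\<forall>i<CARD('n). \<forall>j<CARD('n). u i \<bullet> u j = (if i = j then 1 else 0)"
    and eig: "\<forall>i<CARD('n). S *v u i = lam i *\<^sub>R u i"
  shows "(\<Sum>b\<in>(UNIV::'n set). axis b 1 \<bullet> (S *v axis b 1)) = (\<Sum>i<CARD('n). lam i)"
proof -
  have "(\<Sum>b\<in>(UNIV::'n set). axis b 1 \<bullet> (S *v axis b 1))
      = (\<Sum>b\<in>(UNIV::'n set). \<Sum>i<CARD('n). (u i $ b)^2 * lam i)"
    by (intro sum.cong refl) (simp add: eig_facts(2)[OF on eig] inner_axis')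
  also have "\<dots> = (\<Sum>i<CARD('n). lam i * (\<Sum>b\<in>(UNIV::'n set). (u i $ b)^2))"
    by (subst sum.swap) (simp add: sum_distrib_left mult.commute)
  also have "\<dots> = (\<Sum>i<CARD('n). lam i)"
  proof (intro sum.cong refl)
    fix i assume "i \<in> {..<CARD('n)}"
    then have "u i \<bullet> u i = 1" using on by simp
    then have "(\<Sum>b\<in>(UNIV::'n set). (u i $ b)^2) = 1" by (simp add: inner_vec_def power2_eq_square)
    then show "lam i * (\<Sum>b\<in>(UNIV::'n set). (u i $ b)^2) = lam i" by simp
  qed
  finally show ?thesis .
qed


lemma ssu_sum:
  fixes A :: "real^'n^'n" and B :: "real^'n \<Rightarrow> real^'n \<Rightarrow> real^'m"
  assumes sym: "transpose A = A" and nu: "norm \<nu> = 1"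
    and sff: "\<forall>x z. B x z = inner x (A *v z) *\<^sub>R \<nu>"
  shows "(\<Sum>b\<in>(UNIV::'n set). 4 * (norm (B x (axis b 1)))^2
             - inner (B x x) (B (axis b 1) (axis b 1)))
       = 4 * ((A *v x) \<bullet> (A *v x)) - (x \<bullet> (A *v x)) * (\<Sum>b\<in>(UNIV::'n set). axis b 1 \<bullet> (A *v axis b 1))"
proof -
  have nn: "\<nu> \<bullet> \<nu> = 1" using nu by (simp add: dot_square_norm)
  have "(\<Sum>b\<in>(UNIV::'n set). 4 * (norm (B x (axis b 1)))^2 - inner (B x x) (B (axis b 1) (axis b 1)))
     = (\<Sum>b\<in>(UNIV::'n set). 4 * ((A *v x) $ b)^2 - (x \<bullet> (A *v x)) * (axis b 1 \<bullet> (A *v axis b 1)))"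
  proof (intro sum.cong refl)
    fix b :: 'n
    have "x \<bullet> (A *v axis b 1) = (A *v x) \<bullet> axis b 1" using sym_inner[OF sym] by simp
    also have "\<dots> = (A *v x) $ b" by (simp add: inner_axis)
    finally have e: "x \<bullet> (A *v axis b 1) = (A *v x) $ b" .
    show "4 * (norm (B x (axis b 1)))^2 - inner (B x x) (B (axis b 1) (axis b 1))
        = 4 * ((A *v x) $ b)^2 - (x \<bullet> (A *v x)) * (axis b 1 \<bullet> (A *v axis b 1))"
      using nu nn by (simp add: sff e power_mult_distrib)
  qed
  also have "\<dots> = 4 * ((A *v x) \<bullet> (A *v x)) - (x \<bullet> (A *v x)) * (\<Sum>b\<in>(UNIV::'n set). axis b 1 \<bullet> (A *v axis b 1))"
    by (simp add: sum_subtractf sum_distrib_left inner_vec_def power2_eq_square)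
  finally show ?thesis .
qed


definition trm :: "real^'n^'n \<Rightarrow> real" where
  "trm M = (\<Sum>b\<in>(UNIV::'n set). axis b 1 \<bullet> (M *v axis b 1))"

definition Qf :: "real^'n^'n \<Rightarrow> real^'n \<Rightarrow> real" where
  "Qf M x = 4 * ((M *v x) \<bullet> (M *v x)) - (x \<bullet> (M *v x)) * trm M"

lemma Q_scale:
  fixes A :: "real^'n^'n"
  assumes "s \<in> {1, -1::real}"
  shows "Qf (s *\<^sub>R A) x = Qf A x"
proof -
  have m: "(s *\<^sub>R A) *v y = s *\<^sub>R (A *v y)" for y by (simp add: scaleR_matrix_vector_assoc)
  have ss: "s * s = 1" using assms by auto
  have t: "trm (s *\<^sub>R A) = s * trm A" unfolding trm_def m by (simp add: sum_distrib_left)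
  have "Qf (s *\<^sub>R A) x = 4 * ((s * s) * ((A *v x) \<bullet> (A *v x))) - ((s * s) * (x \<bullet> (A *v x))) * trm A"
    unfolding Qf_def m t by (simp add: algebra_simps)
  then show ?thesis unfolding Qf_def ss by simp
qed

lemma Q_eig:
  fixes S :: "real^'n^'n" and u :: "nat \<Rightarrow> real^'n"
  assumes on: "\<forall>i<CARD('n). \<forall>j<CARD('n). u i \<bullet> u j = (if i = j then 1 else 0)"
    and eig: "\<forall>i<CARD('n). S *v u i = lam i *\<^sub>R u i"
  shows "Qf S x = (\<Sum>i<CARD('n). (x \<bullet> u i)^2 * (lam i * (4 * lam i - (\<Sum>j<CARD('n). lam j))))"
proof -
  have a: "(S *v x) \<bullet> (S *v x) = (\<Sum>i<CARD('n). (x \<bullet> u i)^2 * (lam i)^2)" by (rule eig_facts(3)[OF on eig])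
  have b: "x \<bullet> (S *v x) = (\<Sum>i<CARD('n). (x \<bullet> u i)^2 * lam i)" by (rule eig_facts(2)[OF on eig])
  have c: "trm S = (\<Sum>j<CARD('n). lam j)" unfolding trm_def by (rule trace_eig[OF on eig])
  show ?thesis unfolding Qf_def a b c
    by (simp add: sum_distrib_left sum_distrib_right sum_subtractf[symmetric] algebra_simps power2_eq_square)
qed

lemma point_equiv:
  fixes A :: "real^'n^'n"
  assumes sym: "transpose A = A"
  shows "(\<forall>x. norm x = 1 \<longrightarrow> Qf A x < 0) \<longleftrightarrow>
    (\<exists>s\<in>{1, -1::real}. \<exists>lam. principal_curvatures (s *\<^sub>R A) lam \<and>
        0 < lam 0 \<and> lam (CARD('n) - 1) < (\<Sum>i<CARD('n) - 1. lam i) / 3)"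
proof
  obtain m where n: "CARD('n) = Suc m" using gr0_implies_Suc[of "CARD('n)"] by auto
  assume H: "\<forall>x. norm x = 1 \<longrightarrow> Qf A x < 0"
  define t where "t = trm A"
  have "t \<noteq> 0"
  proof
    assume "t = 0"
    obtain b :: 'n where True by simp
    have "Qf A (axis b 1) < 0" using H by simp
    then show False using \<open>t = 0\<close> inner_ge_zero[of "A *v axis b 1"] unfolding Qf_def t_def[symmetric] by simp
  qed
  define s :: real where "s = (if t > 0 then 1 else -1)"
  have s: "s \<in> {1, -1}" unfolding s_def by simp
  define S where "S = s *\<^sub>R A"
  have symS: "transpose S = S" unfolding S_def by (simp add: transpose_scalar sym)
  have trS: "trm S > 0"
  proof -
    have "trm S = s * t" unfolding S_def t_def trm_def
      by (simp add: scaleR_matrix_vector_assoc[symmetric] sum_distrib_left)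
    then show ?thesis using \<open>t \<noteq> 0\<close> unfolding s_def by (auto simp: mult_neg_neg)
  qed
  obtain lam where pc: "principal_curvatures S lam" using spectral[OF symS] by blast
  then obtain u where on: "\<forall>i<CARD('n). \<forall>j<CARD('n). u i \<bullet> u j = (if i = j then 1 else 0)"
    and eig: "\<forall>i<CARD('n). S *v u i = lam i *\<^sub>R u i"
    and sorted: "\<forall>i j. i \<le> j \<and> j < CARD('n) \<longrightarrow> lam i \<le> lam j"
    unfolding principal_curvatures_def by blast
  have trS': "trm S = (\<Sum>i<CARD('n). lam i)" unfolding trm_def by (rule trace_eig[OF on eig])
  have key: "0 < lam i \<and> 4 * lam i < trm S" if i: "i < CARD('n)" for i
  proof -
    have uu: "u i \<bullet> u i = 1" using on i by simp
    then have "norm (u i) = 1" by (metis norm_eq_sqrt_inner real_sqrt_one)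
    then have "Qf S (u i) < 0" using H Q_scale[OF s, of A "u i"] unfolding S_def by simp
    then have "4 * (lam i * lam i) - lam i * trm S < 0"
      unfolding Qf_def using eig i uu by (simp add: algebra_simps)
    note q = this
    have a: "0 < lam i"
    proof (rule ccontr)
      assume "\<not> 0 < lam i"
      then have "lam i * trm S \<le> 0" using trS by (simp add: mult_nonpos_nonneg)
      moreover have "0 \<le> lam i * lam i" by simp
      ultimately show False using q by linarith
    qed
    have "lam i * (4 * lam i) < lam i * trm S" using q by (simp add: algebra_simps)
    then have "4 * lam i < trm S" using a by simp
    then show ?thesis using a by simp
  qed
  have "0 < lam 0" using key n by simp
  moreover have "lam (CARD('n) - 1) < (\<Sum>i<CARD('n) - 1. lam i) / 3"
  proof -
    have "4 * lam m < (\<Sum>i<m. lam i) + lam m" using key[of m] n trS' by simp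
    then show ?thesis using n by simp
  qed
  ultimately show "\<exists>s\<in>{1, -1::real}. \<exists>lam. principal_curvatures (s *\<^sub>R A) lam \<and>
        0 < lam 0 \<and> lam (CARD('n) - 1) < (\<Sum>i<CARD('n) - 1. lam i) / 3"
    using s pc unfolding S_def by blast
next
  obtain m where n: "CARD('n) = Suc m" using gr0_implies_Suc[of "CARD('n)"] by auto
  assume "\<exists>s\<in>{1, -1::real}. \<exists>lam. principal_curvatures (s *\<^sub>R A) lam \<and>
        0 < lam 0 \<and> lam (CARD('n) - 1) < (\<Sum>i<CARD('n) - 1. lam i) / 3"
  then obtain s lam where s: "s \<in> {1, -1::real}" and pc: "principal_curvatures (s *\<^sub>R A) lam"
    and l0: "0 < lam 0" and lt: "lam (CARD('n) - 1) < (\<Sum>i<CARD('n) - 1. lam i) / 3" by blast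
  define S where "S = s *\<^sub>R A"
  obtain u where on: "\<forall>i<CARD('n). \<forall>j<CARD('n). u i \<bullet> u j = (if i = j then 1 else 0)"
    and eig: "\<forall>i<CARD('n). S *v u i = lam i *\<^sub>R u i"
    and sorted: "\<forall>i j. i \<le> j \<and> j < CARD('n) \<longrightarrow> lam i \<le> lam j"
    using pc unfolding principal_curvatures_def S_def by blast
  define T where "T = (\<Sum>j<CARD('n). lam j)"
  have T: "T = (\<Sum>i<m. lam i) + lam m" unfolding T_def n by simp
  have neg: "lam i * (4 * lam i - T) < 0" if i: "i < CARD('n)" for i
  proof -
    have "0 < lam i" using l0 sorted i by (meson le0 less_le_trans)
    moreover have "lam i \<le> lam m" using sorted i n by simp
    moreover have "3 * lam m < (\<Sum>i<m. lam i)" using lt n by simp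
    ultimately show ?thesis using T by (simp add: mult_pos_neg)
  qed
  show "\<forall>x. norm x = 1 \<longrightarrow> Qf A x < 0"
  proof (intro allI impI)
    fix x :: "real^'n" assume x: "norm x = 1"
    have "x \<bullet> x = 1" using x by (simp add: dot_square_norm)
    then have sumc: "(\<Sum>i<CARD('n). (x \<bullet> u i)^2) = 1" using eig_facts(1)[OF on eig] by simp
    have "\<exists>i\<in>{..<CARD('n)}. (x \<bullet> u i)^2 \<noteq> 0"
    proof (rule ccontr)
      assume "\<not> ?thesis"
      then have "(\<Sum>i<CARD('n). (x \<bullet> u i)^2) = 0" by simp
      then show False using sumc by simp
    qed
    then obtain i where i: "i < CARD('n)" "(x \<bullet> u i)^2 \<noteq> 0" by auto
    have "(\<Sum>i<CARD('n). (x \<bullet> u i)^2 * (lam i * (4 * lam i - T))) < (\<Sum>i<CARD('n). 0)"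
    proof (rule sum_strict_mono_ex1)
      show "\<forall>j\<in>{..<CARD('n)}. (x \<bullet> u j)^2 * (lam j * (4 * lam j - T)) \<le> 0"
        using neg by (metis lessThan_iff less_imp_le mult_nonneg_nonpos zero_le_power2)
      show "\<exists>j\<in>{..<CARD('n)}. (x \<bullet> u j)^2 * (lam j * (4 * lam j - T)) < 0"
        using neg i by (intro bexI[of _ i]) (auto intro: mult_pos_neg)
    qed simp
    then have "Qf S x < 0" unfolding Q_eig[OF on eig] T_def by simp
    then show "Qf A x < 0" using Q_scale[OF s, of A x] unfolding S_def by simp
  qed
qed


theorem theorem5p1:
  fixes N :: "'y set"
    and B :: "'y \<Rightarrow> real^'n \<Rightarrow> real^'n \<Rightarrow> real^'m"
    and A :: "'y \<Rightarrow> real^'n^'n"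
    and \<nu> :: "'y \<Rightarrow> real^'m"
  assumes hyp: "CARD('m) = CARD('n) + 1"
    and sym: "\<forall>y\<in>N. transpose (A y) = A y"
    and unit: "\<forall>y\<in>N. norm (\<nu> y) = 1"
    and sff: "\<forall>y\<in>N. \<forall>x z. B y x z = inner x (A y *v z) *\<^sub>R \<nu> y"
  shows "phi_SSU N B \<longleftrightarrow>
    (\<forall>y\<in>N. \<exists>s\<in>{1, -1::real}. \<exists>lam. principal_curvatures (s *\<^sub>R A y) lam \<and>
        0 < lam 0 \<and> lam (CARD('n) - 1) < (\<Sum>i<CARD('n) - 1. lam i) / 3)"
proof -
  have eq: "(\<Sum>b\<in>(UNIV::'n set). 4 * (norm (B y x (axis b 1)))^2
             - inner (B y x x) (B y (axis b 1) (axis b 1))) = Qf (A y) x" if y: "y \<in> N" for y x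
    unfolding Qf_def trm_def
    by (rule ssu_sum[of "A y" "\<nu> y" "B y"]) (use sym unit sff y in auto)
  have "phi_SSU N B \<longleftrightarrow> (\<forall>y\<in>N. \<forall>x. norm x = 1 \<longrightarrow> Qf (A y) x < 0)"
    unfolding phi_SSU_def using eq by simp
  also have "\<dots> \<longleftrightarrow> (\<forall>y\<in>N. \<exists>s\<in>{1, -1::real}. \<exists>lam. principal_curvatures (s *\<^sub>R A y) lam \<and>
        0 < lam 0 \<and> lam (CARD('n) - 1) < (\<Sum>i<CARD('n) - 1. lam i) / 3)"
    using point_equiv sym by blast
  finally show ?thesis .
qed

end
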